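(* There is an absolute constant $c_0>0$ such that for every $\epsilon\in(0,1/2]$ and every integer $d\ge 1$, with $n=2^{d+1}-2$, the binary-tree function $f:\{0,1\}^n\to\{0,1\}$ of depth $d$ (which is computable by a read-once formula) satisfies, under unit costs ($c_i=1$ for all $i$) and $p_i=\frac{1+\epsilon}{2}$ for all $i$, $$\mathsf{OPT}_{\mathcal N}(f,c,p)\ge c_0\,\epsilon^3\, n^{1-2\epsilon/\ln 2}\cdot \mathsf{OPT}_{\mathcal A}(f,c,p).$$
   Context: Stochastic Boolean Function Evaluation (SBFE) setup: $f:\{0,1\}^n\to\{0,1\}$ is a known Boolean function, $c\in\mathbb{R}_{>0}^n$ a cost vector and $p\in(0,1)^n$ a probability vector. The unknown input $x\in\{0,1\}^n$ is random with independent coordinates and $\Pr(x_i=1)=p_i$. The value $x_i$ can only be learned by testing variable $i$, at cost $c_i$. A strategy tests variables sequentially until $f(x)$ is determined, i.e. until $f(x')=f(x)$ for every $x'$ agreeing with $x$ on all tested coordinates. An adaptive strategy is a decision tree (the next test may depend on previous outcomes); a non-adaptive strategy is a fixed permutation of $[n]$, with variables tested in that order until $f(x)$ is determined. $\mathrm{cost}_{c,p}(f,S)$ is the expected total cost of tests performed by $S$ for random $x$. $\mathsf{OPT}_{\mathcal A}(f,c,p)$ (resp. $\mathsf{OPT}_{\mathcal N}(f,c,p)$) is the minimum of $\mathrm{cost}_{c,p}(f,S)$ over all adaptive (resp. non-adaptive) strategies. Binary-tree function of depth $d$: take the complete binary tree of depth $d$ (root at depth $0$, $2^d$ leaves at depth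 $d$); it has $n=2^{d+1}-2$ edges, numbered $1,\dots,n$, and variable $x_i$ is associated with edge $i$. A leaf is alive if $x_i=1$ for every edge $i$ on the path from the root to that leaf. Then $f(x)=1$ iff at least one leaf is alive. (A read-once formula is a tree whose internal nodes are labeled $\wedge$ or $\vee$ and whose leaves are labeled by distinct variables.) *)

theory Defs
  imports Complex_Main
begin

text \<open>Stochastic Boolean Function Evaluation. Variables are indexed by 0..n-1.
  An input is a function nat => bool which is False outside {0..<n}.\<close>

definition cube :: "nat \<Rightarrow> (nat \<Rightarrow> bool) set" where
  "cube n = {x. \<forall>i. n \<le> i \<longrightarrow> \<not> x i}"

definition prob :: "(nat \<Rightarrow> real) \<Rightarrow> nat \<Rightarrow> (nat \<Rightarrow> bool) \<Rightarrow> real" where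
  "prob p n x = (\<Prod>i<n. if x i then p i else 1 - p i)"

definition determined :: "((nat \<Rightarrow> bool) \<Rightarrow> bool) \<Rightarrow> nat \<Rightarrow> nat set \<Rightarrow> (nat \<Rightarrow> bool) \<Rightarrow> bool" where
  "determined f n T x \<longleftrightarrow> (\<forall>y\<in>cube n. (\<forall>i\<in>T. y i = x i) \<longrightarrow> f y = f x)"

definition perms :: "nat \<Rightarrow> nat list set" where
  "perms n = {\<pi>. distinct \<pi> \<and> set \<pi> = {..<n}}"

definition na_stop :: "((nat \<Rightarrow> bool) \<Rightarrow> bool) \<Rightarrow> nat \<Rightarrow> nat list \<Rightarrow> (nat \<Rightarrow> bool) \<Rightarrow> nat" where
  "na_stop f n \<pi> x = (LEAST k. determined f n (set (take k \<pi>)) x)"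

definition na_cost :: "((nat \<Rightarrow> bool) \<Rightarrow> bool) \<Rightarrow> nat \<Rightarrow> (nat \<Rightarrow> real) \<Rightarrow> (nat \<Rightarrow> real)
    \<Rightarrow> nat list \<Rightarrow> real" where
  "na_cost f n c p \<pi> =
     (\<Sum>x\<in>cube n. prob p n x * sum_list (map c (take (na_stop f n \<pi> x) \<pi>)))"

definition OPT_N :: "((nat \<Rightarrow> bool) \<Rightarrow> bool) \<Rightarrow> nat \<Rightarrow> (nat \<Rightarrow> real) \<Rightarrow> (nat \<Rightarrow> real) \<Rightarrow> real" where
  "OPT_N f n c p = Inf (na_cost f n c p ` perms n)"

datatype dtree = Leaf | Node nat dtree dtree

fun dt_path :: "dtree \<Rightarrow> (nat \<Rightarrow> bool) \<Rightarrow> nat list" where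
  "dt_path Leaf x = []"
| "dt_path (Node i l r) x = i # dt_path (if x i then r else l) x"

definition valid_dt :: "((nat \<Rightarrow> bool) \<Rightarrow> bool) \<Rightarrow> nat \<Rightarrow> dtree \<Rightarrow> bool" where
  "valid_dt f n t \<longleftrightarrow> (\<forall>x\<in>cube n. set (dt_path t x) \<subseteq> {..<n} \<and> determined f n (set (dt_path t x)) x)"

definition dt_cost :: "nat \<Rightarrow> (nat \<Rightarrow> real) \<Rightarrow> (nat \<Rightarrow> real) \<Rightarrow> dtree \<Rightarrow> real" where
  "dt_cost n c p t = (\<Sum>x\<in>cube n. prob p n x * sum_list (map c (dt_path t x)))"

definition OPT_A :: "((nat \<Rightarrow> bool) \<Rightarrow> bool) \<Rightarrow> nat \<Rightarrow> (nat \<Rightarrow> real) \<Rightarrow> (nat \<Rightarrow> real) \<Rightarrow> real" where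
  "OPT_A f n c p = Inf (dt_cost n c p ` {t. valid_dt f n t})"

text \<open>Heap numbering of the complete binary tree: nodes 1..2^(d+1)-1, root 1, children of v are
  2v and 2v+1. The edge entering node v (v >= 2) carries variable v-2, so the n = 2^(d+1)-2 edges
  carry variables 0..n-1. Leaves are v in [2^d, 2^(d+1)); the edges on the root-leaf path of v are
  those entering v div 2^k for k < d.\<close>
definition bintree_fun :: "nat \<Rightarrow> (nat \<Rightarrow> bool) \<Rightarrow> bool" where
  "bintree_fun d x \<longleftrightarrow> (\<exists>v\<in>{2^d..<2^(d+1)}. \<forall>k<d. x (v div 2^k - 2))"

end

theory Submission
  imports Defs
begin


definition E :: "nat \<Rightarrow> (nat \<Rightarrow> real) \<Rightarrow> ((nat \<Rightarrow> bool) \<Rightarrow> real) \<Rightarrow> real" where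
  "E n p h = (\<Sum>x\<in>cube n. prob p n x * h x)"

definition dep :: "((nat \<Rightarrow> bool) \<Rightarrow> 'a) \<Rightarrow> nat set \<Rightarrow> bool" where
  "dep h A \<longleftrightarrow> (\<forall>x y. (\<forall>i\<in>A. x i = y i) \<longrightarrow> h x = h y)"

lemma cube_Suc: "cube (Suc n) = (\<lambda>(x,b). x(n:=b)) ` (cube n \<times> UNIV)"
proof (rule set_eqI, rule iffI)
  fix y assume y: "y \<in> cube (Suc n)"
  have "y = (\<lambda>(x,b). x(n:=b)) (y(n:=False), y n)" by auto
  moreover have "y(n:=False) \<in> cube n" using y by (auto simp: cube_def)
  ultimately show "y \<in> (\<lambda>(x,b). x(n:=b)) ` (cube n \<times> UNIV)" by blast
next
  fix y assume "y \<in> (\<lambda>(x,b). x(n:=b)) ` (cube n \<times> UNIV)"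
  then show "y \<in> cube (Suc n)" by (auto simp: cube_def)
qed

lemma cube_inj: "inj_on (\<lambda>(x,b). x(n:=b)) (cube n \<times> UNIV)"
proof (rule inj_onI, clarify)
  fix x b x' b' assume x: "x \<in> cube n" and x': "x' \<in> cube n" and eq: "x(n:=b) = x'(n:=b')"
  have "b = b'" using fun_cong[OF eq, of n] by simp
  moreover have "x = x'"
  proof
    fix i show "x i = x' i"
      using fun_cong[OF eq, of i] x x' by (cases "i = n") (auto simp: cube_def)
  qed
  ultimately show "x = x' \<and> b = b'" by simp
qed

lemma finite_cube: "finite (cube n)"
proof (induction n)
  case 0
  have "cube 0 = {\<lambda>_. False}" by (auto simp: cube_def)
  then show ?case by simp
next
  case (Suc n) then show ?case by (simp add: cube_Suc)
qed

lemma prob_upd: "x \<in> cube n \<Longrightarrow> prob p (Suc n) (x(n:=b)) = prob p n x * (if b then p n else 1 - p n)"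
  unfolding prob_def by (simp add: prod.lessThan_Suc)

lemma E_Suc: "E (Suc n) p h = p n * E n p (\<lambda>x. h (x(n:=True))) + (1 - p n) * E n p (\<lambda>x. h (x(n:=False)))"
proof -
  have "E (Suc n) p h = (\<Sum>(x,b)\<in>cube n \<times> UNIV. prob p (Suc n) (x(n:=b)) * h (x(n:=b)))"
    unfolding E_def cube_Suc by (subst sum.reindex[OF cube_inj]) (simp add: case_prod_beta')
  also have "\<dots> = (\<Sum>x\<in>cube n. \<Sum>b\<in>UNIV. prob p (Suc n) (x(n:=b)) * h (x(n:=b)))"
    by (rule sum.cartesian_product[symmetric])
  also have "\<dots> = (\<Sum>x\<in>cube n. p n * (prob p n x * h (x(n:=True))) + (1 - p n) * (prob p n x * h (x(n:=False))))"
    by (rule sum.cong) (auto simp: UNIV_bool prob_upd)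
  also have "\<dots> = p n * E n p (\<lambda>x. h (x(n:=True))) + (1 - p n) * E n p (\<lambda>x. h (x(n:=False)))"
    unfolding E_def by (simp add: sum.distrib sum_distrib_left)
  finally show ?thesis .
qed

lemma E_0: "E 0 p h = h (\<lambda>_. False)"
proof -
  have "cube 0 = {\<lambda>_. False}" by (auto simp: cube_def)
  then show ?thesis by (simp add: E_def prob_def)
qed

lemma E_const: "E n p (\<lambda>_. c) = c"
  by (induction n) (simp_all add: E_0 E_Suc algebra_simps)

lemma E_cong: "(\<And>x. x \<in> cube n \<Longrightarrow> f x = g x) \<Longrightarrow> E n p f = E n p g"
  unfolding E_def by (rule sum.cong) auto

lemma E_add: "E n p (\<lambda>x. f x + g x) = E n p f + E n p g"
  unfolding E_def by (simp add: sum.distrib algebra_simps)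

lemma E_diff: "E n p (\<lambda>x. f x - g x) = E n p f - E n p g"
  unfolding E_def by (simp add: sum_subtractf algebra_simps)

lemma E_cmult: "E n p (\<lambda>x. c * f x) = c * E n p f"
  unfolding E_def by (simp add: sum_distrib_left algebra_simps)

lemma E_sum: "finite W \<Longrightarrow> E n p (\<lambda>x. \<Sum>w\<in>W. f w x) = (\<Sum>w\<in>W. E n p (f w))"
  unfolding E_def by (simp add: sum_distrib_left sum.swap[of _ W])

lemma prob_nonneg: "(\<And>i. 0 \<le> p i \<and> p i \<le> 1) \<Longrightarrow> 0 \<le> prob p n x"
  unfolding prob_def by (rule prod_nonneg) (auto simp: algebra_simps)

lemma E_mono: "(\<And>i. 0 \<le> p i \<and> p i \<le> 1) \<Longrightarrow> (\<And>x. x \<in> cube n \<Longrightarrow> f x \<le> g x) \<Longrightarrow> E n p f \<le> E n p g"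
  unfolding E_def by (rule sum_mono) (auto intro: mult_left_mono prob_nonneg)

lemma dep_upd: "dep f A \<Longrightarrow> dep (\<lambda>x. f (x(n:=b))) A"
  unfolding dep_def by auto

lemma dep_upd_out: "dep f A \<Longrightarrow> n \<notin> A \<Longrightarrow> (\<lambda>x. f (x(n:=b))) = f"
  unfolding dep_def by (rule ext) (metis fun_upd_other)

lemma E_indep: "A \<inter> B = {} \<Longrightarrow> dep f A \<Longrightarrow> dep g B \<Longrightarrow> E n p (\<lambda>x. f x * g x) = E n p f * E n p g"
proof (induction n arbitrary: f g)
  case 0 then show ?case by (simp add: E_0)
next
  case (Suc n)
  have IH: "\<And>b. E n p (\<lambda>x. f (x(n:=b)) * g (x(n:=b))) = E n p (\<lambda>x. f (x(n:=b))) * E n p (\<lambda>x. g (x(n:=b)))"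
    using Suc.prems by (intro Suc.IH dep_upd)
  show ?case
  proof (cases "n \<in> A")
    case False
    then have "\<And>b. (\<lambda>x. f (x(n:=b))) = f" using Suc.prems dep_upd_out by blast
    then show ?thesis unfolding E_Suc IH by (simp add: algebra_simps)
  next
    case True
    then have "n \<notin> B" using Suc.prems by blast
    then have "\<And>b. (\<lambda>x. g (x(n:=b))) = g" using Suc.prems dep_upd_out by blast
    then show ?thesis unfolding E_Suc IH by (simp add: algebra_simps)
  qed
qed

lemma E_nodep: "dep h A \<Longrightarrow> n \<notin> A \<Longrightarrow> E (Suc n) p h = E n p h"
  using dep_upd_out[of h A n] by (simp add: E_Suc algebra_simps)

lemma dep_coord: "dep (\<lambda>x. f (x a)) {a}"
  unfolding dep_def by auto

lemma E_coord: "a < n \<Longrightarrow> E n p (\<lambda>x. of_bool (x a)) = p a"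
proof (induction n)
  case 0 then show ?case by simp
next
  case (Suc m)
  show ?case
  proof (cases "a = m")
    case True then show ?thesis by (simp add: E_Suc E_const)
  next
    case False
    then have "a < m" using Suc.prems by simp
    have "E (Suc m) p (\<lambda>x. of_bool (x a)) = E m p (\<lambda>x. of_bool (x a))"
      by (rule E_nodep[OF dep_coord[of "\<lambda>b. of_bool b" a]]) (use False in simp)
    then show ?thesis using Suc.IH \<open>a < m\<close> by simp
  qed
qed

lemma E_ones: "finite S \<Longrightarrow> S \<subseteq> {..<n} \<Longrightarrow> E n p (\<lambda>x. of_bool (\<forall>i\<in>S. x i)) = (\<Prod>i\<in>S. p i)"
proof (induction S rule: finite_induct)
  case empty then show ?case by (simp add: E_const)
next
  case (insert a S)
  have "E n p (\<lambda>x. of_bool (\<forall>i\<in>insert a S. x i)) = E n p (\<lambda>x. of_bool (x a) * of_bool (\<forall>i\<in>S. x i))"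
    by (rule E_cong) simp
  also have "\<dots> = E n p (\<lambda>x. of_bool (x a)) * E n p (\<lambda>x. of_bool (\<forall>i\<in>S. x i))"
    by (rule E_indep[of "{a}" S]) (use insert in \<open>auto simp: dep_def\<close>)
  also have "\<dots> = p a * (\<Prod>i\<in>S. p i)" using insert by (simp add: E_coord)
  finally show ?case using insert by simp
qed




lemma div_eq_iff_nat: "0 < (m::nat) \<Longrightarrow> (w div m = a) \<longleftrightarrow> (a*m \<le> w \<and> w < (a+1)*m)"
  by (meson div_less_iff_less_mult le_antisym less_add_one
    less_eq_div_iff_mult_less_eq less_inc_imp_less_eq)

definition al :: "nat \<Rightarrow> nat \<Rightarrow> (nat \<Rightarrow> bool) \<Rightarrow> bool" where
  "al v h x \<longleftrightarrow> (\<exists>w. w div 2^h = v \<and> (\<forall>k<h. x (w div 2^k - 2)))"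

lemma bt_al: "bintree_fun d = al 1 d"
proof (rule ext)
  fix x
  have "((w::nat) div 2^d = 1) \<longleftrightarrow> w \<in> {2^d..<2^(d+1)}" for w
  proof -
    have "(w div 2^d = 1) \<longleftrightarrow> (1 * 2^d \<le> w \<and> w < (1+1) * 2^d)"
      by (rule div_eq_iff_nat) simp
    then show ?thesis by (simp add: mult_2)
  qed
  then show "bintree_fun d x = al 1 d x" unfolding bintree_fun_def al_def by (simp only: Bex_def)
qed

lemma div2_eq: "((u::nat) div 2 = v) \<longleftrightarrow> (u = 2*v \<or> u = 2*v+1)"
  by auto

lemma al_Suc: "al v (Suc h) x \<longleftrightarrow> (x (2*v-2) \<and> al (2*v) h x) \<or> (x (2*v-1) \<and> al (2*v+1) h x)"
proof -
  have e: "\<And>w::nat. w div 2^(Suc h) = w div 2^h div 2"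
    by (subst power_Suc2) (rule div_mult2_eq)
  have "al v (Suc h) x \<longleftrightarrow> (\<exists>w. (w div 2^h = 2*v \<or> w div 2^h = 2*v+1) \<and> (\<forall>k<h. x (w div 2^k - 2)) \<and> x (w div 2^h - 2))"
    unfolding al_def e div2_eq by (auto simp: less_Suc_eq)
  also have "\<dots> \<longleftrightarrow> (x (2*v-2) \<and> al (2*v) h x) \<or> (x (2*v-1) \<and> al (2*v+1) h x)"
    unfolding al_def by auto
  finally show ?thesis .
qed

definition Cset :: "nat \<Rightarrow> nat \<Rightarrow> nat set" where
  "Cset v h = {w div 2^k - 2 | w k. w div 2^h = v \<and> k < h}"

lemma dep_mono: "dep f A \<Longrightarrow> A \<subseteq> B \<Longrightarrow> dep f B"
  unfolding dep_def by blast

lemma dep_comb: "dep f A \<Longrightarrow> dep g B \<Longrightarrow> dep (\<lambda>x. F (f x) (g x)) (A \<union> B)"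
proof -
  assume a: "dep f A" "dep g B"
  show ?thesis unfolding dep_def
  proof (intro allI impI)
    fix x y :: "nat \<Rightarrow> bool" assume "\<forall>i\<in>A \<union> B. x i = y i"
    then have "f x = f y" "g x = g y" using a unfolding dep_def by auto
    then show "F (f x) (g x) = F (f y) (g y)" by simp
  qed
qed

lemma dep_comp: "dep f A \<Longrightarrow> dep (\<lambda>x. F (f x)) A"
  unfolding dep_def by (intro allI impI) (metis (full_types))

lemma dep_al: "dep (al v h) (Cset v h)"
proof -
  have "al v h x \<Longrightarrow> \<forall>i\<in>Cset v h. x i = y i \<Longrightarrow> al v h y" for x y
    unfolding al_def Cset_def by blast
  then show ?thesis unfolding dep_def by blast
qed

lemma Cset_sub: "Cset (2*v) h \<subseteq> Cset v (Suc h)" "Cset (2*v+1) h \<subseteq> Cset v (Suc h)"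
  "2*v-2 \<in> Cset v (Suc h)" "2*v-1 \<in> Cset v (Suc h)"
proof -
  have e: "\<And>w::nat. w div 2^(Suc h) = w div 2^h div 2"
    by (subst power_Suc2) (rule div_mult2_eq)
  show "Cset (2*v) h \<subseteq> Cset v (Suc h)" unfolding Cset_def e by force
  show "Cset (2*v+1) h \<subseteq> Cset v (Suc h)" unfolding Cset_def e by force
  have "2*v-2 = (2*v*2^h) div 2^h - 2 \<and> (2*v*2^h) div 2^h div 2 = v \<and> h < Suc h" by simp
  then show "2*v-2 \<in> Cset v (Suc h)" unfolding Cset_def e by blast
  have "2*v-1 = ((2*v+1)*2^h) div 2^h - 2 \<and> ((2*v+1)*2^h) div 2^h div 2 = v \<and> h < Suc h" by simp
  then show "2*v-1 \<in> Cset v (Suc h)" unfolding Cset_def e by blast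
qed

lemma div_pow_add: "(u::nat) div 2^(a+b) = u div 2^a div 2^b"
  by (simp add: power_add div_mult2_eq)

lemma Cset_char: "i \<in> Cset a h \<Longrightarrow> \<exists>u j. i = u - 2 \<and> u div 2^j = a \<and> 1 \<le> j"
proof -
  assume "i \<in> Cset a h"
  then obtain w k where i: "i = w div 2^k - 2" and w: "w div 2^h = a" and k: "k < h"
    unfolding Cset_def by blast
  have "w div 2^k div 2^(h-k) = a"
    using w k div_pow_add[of w k "h-k"] by simp
  then show ?thesis using i k by (intro exI[of _ "w div 2^k"] exI[of _ "h-k"]) auto
qed

lemma div_pow_le: "(u::nat) div 2^j \<le> u" by (simp add: div_le_dividend)

lemma div_pow_lt: "1 \<le> j \<Longrightarrow> 0 < (u::nat) \<Longrightarrow> u div 2^j < u"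
proof -
  assume "1 \<le> j" "0 < u"
  moreover have "1 < (2::nat)^j" using \<open>1 \<le> j\<close> using one_less_power[of "2::nat" j] by simp
  ultimately show ?thesis by (simp add: div_less_dividend)
qed

lemma anc_disj: "1 \<le> (v::nat) \<Longrightarrow> u div 2^j = 2*v \<Longrightarrow> u div 2^j' = 2*v+1 \<Longrightarrow> False"
proof -
  assume v: "1 \<le> v" and a: "u div 2^j = 2*v" and b: "u div 2^j' = 2*v+1"
  show False
  proof (cases "j \<le> j'")
    case True
    have "u div 2^j' = u div 2^j div 2^(j'-j)"
      using True div_pow_add[of u j "j'-j"] by simp
    then have "2*v+1 = (2*v) div 2^(j'-j)" using a b by simp
    then show False using div_pow_le[of "2*v" "j'-j"] by simp
  next
    case False
    have "u div 2^j = u div 2^j' div 2^(j-j')"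
      using False div_pow_add[of u j' "j-j'"] by simp
    then have "2*v = (2*v+1) div 2^(j-j')" using a b by simp
    moreover have "(2*v+1) div 2^(j-j') \<le> (2*v+1) div 2"
    proof (rule div_le_mono2)
      have "(2::nat)^1 \<le> 2^(j-j')" using False by (intro power_increasing) auto
      then show "2 \<le> (2::nat)^(j-j')" by simp
    qed simp
    ultimately show False using v by simp
  qed
qed

definition SL :: "nat \<Rightarrow> nat \<Rightarrow> nat set" where "SL v h = insert (2*v-2) (Cset (2*v) h)"
definition SR :: "nat \<Rightarrow> nat \<Rightarrow> nat set" where "SR v h = insert (2*v-1) (Cset (2*v+1) h)"

lemma SL_char: "i \<in> SL v h \<Longrightarrow> \<exists>u j. i = u - 2 \<and> u div 2^j = 2*v"
proof -
  assume "i \<in> SL v h"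
  then consider "i = 2*v-2" | "i \<in> Cset (2*v) h" unfolding SL_def by blast
  then show ?thesis
  proof cases
    case 1 then show ?thesis by (intro exI[of _ "2*v"] exI[of _ 0]) simp
  next
    case 2 then show ?thesis using Cset_char by blast
  qed
qed
lemma SR_char: "i \<in> SR v h \<Longrightarrow> \<exists>u j. i = u - 2 \<and> u div 2^j = 2*v+1"
proof -
  assume "i \<in> SR v h"
  then consider "i = 2*v-1" | "i \<in> Cset (2*v+1) h" unfolding SR_def by blast
  then show ?thesis
  proof cases
    case 1 then show ?thesis by (intro exI[of _ "2*v+1"] exI[of _ 0]) simp
  next
    case 2 then show ?thesis using Cset_char by blast
  qed
qed

lemma SL_SR_disj: "1 \<le> v \<Longrightarrow> SL v h \<inter> SR v h' = {}"
proof (rule ccontr)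
  assume v: "1 \<le> v" and "SL v h \<inter> SR v h' \<noteq> {}"
  then obtain i where "i \<in> SL v h" "i \<in> SR v h'" by blast
  then obtain u j u' j' where a: "i = u - 2" "u div 2^j = 2*v" and b: "i = u' - 2" "u' div 2^j' = 2*v+1"
    using SL_char[of i v h] SR_char[of i v h'] by blast
  have "u \<ge> 2" using a(2) div_pow_le[of u j] v by linarith
  moreover have "u' \<ge> 2" using b(2) div_pow_le[of u' j'] v by linarith
  ultimately have "u = u'" using a(1) b(1) by simp
  then show False using anc_disj[OF v a(2)] b(2) by simp
qed

lemma Cset_disj_L: "1 \<le> v \<Longrightarrow> {2*v-2} \<inter> Cset (2*v) h = {}"
proof (rule ccontr)
  assume v: "1 \<le> v" and "{2*v-2} \<inter> Cset (2*v) h \<noteq> {}"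
  then obtain u j where a: "2*v-2 = u - 2" "u div 2^j = 2*v" "1 \<le> j" using Cset_char by blast
  have "u \<ge> 2*v" using a(2) div_pow_le[of u j] by linarith
  then have "u = 2*v" using a(1) v by simp
  then show False using div_pow_lt[OF a(3), of u] a(2) v by simp
qed

lemma Cset_disj_R: "1 \<le> v \<Longrightarrow> {2*v-1} \<inter> Cset (2*v+1) h = {}"
proof (rule ccontr)
  assume v: "1 \<le> v" and "{2*v-1} \<inter> Cset (2*v+1) h \<noteq> {}"
  then obtain u j where a: "2*v-1 = u - 2" "u div 2^j = 2*v+1" "1 \<le> j" using Cset_char by blast
  have "u \<ge> 2*v+1" using a(2) div_pow_le[of u j] by linarith
  then have "u = 2*v+1" using a(1) v by simp
  then show False using div_pow_lt[OF a(3), of u] a(2) v by simp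
qed




fun ex :: "nat \<Rightarrow> nat \<Rightarrow> (nat \<Rightarrow> bool) \<Rightarrow> nat list" where
  "ex v 0 x = []"
| "ex v (Suc h) x = (2*v-2) # (if x (2*v-2) then ex (2*v) h x else []) @
      (2*v-1) # (if x (2*v-1) then ex (2*v+1) h x else [])"

fun et :: "nat \<Rightarrow> nat \<Rightarrow> dtree \<Rightarrow> dtree" where
  "et v 0 K = K"
| "et v (Suc h) K = (let R = Node (2*v-1) K (et (2*v+1) h K) in Node (2*v-2) R (et (2*v) h R))"

lemma path_et: "dt_path (et v h K) x = ex v h x @ dt_path K x"
  by (induction h arbitrary: v K) (auto simp: Let_def)

lemma al_0: "al v 0 x"
  unfolding al_def by auto

lemma ex_det: "(\<forall>i\<in>set (ex v h x). y i = x i) \<Longrightarrow> al v h y = al v h x"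
proof (induction h arbitrary: v)
  case 0 then show ?case by (simp add: al_0)
next
  case (Suc h)
  have a: "y (2*v-2) = x (2*v-2)" "y (2*v-1) = x (2*v-1)" using Suc.prems by auto
  have l: "x (2*v-2) \<Longrightarrow> al (2*v) h y = al (2*v) h x"
    using Suc.prems by (intro Suc.IH) auto
  have r: "x (2*v-1) \<Longrightarrow> al (2*v+1) h y = al (2*v+1) h x"
    using Suc.prems by (intro Suc.IH) auto
  show ?case unfolding al_Suc using a l r by auto
qed

lemma step_bounds:
  fixes v h d :: nat
  assumes "1 \<le> v" "(v+1)*2^(Suc h) \<le> 2^(d+1)"
  shows "2*v-2 < 2^(d+1)-2" "2*v-1 < 2^(d+1)-2" "(2*v+1)*2^h \<le> 2^(d+1)" "(2*v+1+1)*2^h \<le> 2^(d+1)"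
proof -
  have p: "(1::nat) \<le> 2^h" by simp
  have "(v+1)*2 \<le> (v+1)*2*2^h" using p by (metis mult_le_mono2 nat_mult_1_right)
  then have b: "2*v+2 \<le> 2^(d+1)" using assms(2) by (simp add: algebra_simps)
  then show "2*v-2 < 2^(d+1)-2" "2*v-1 < 2^(d+1)-2" using assms(1) by auto
  show c2: "(2*v+1+1)*2^h \<le> 2^(d+1)" using assms(2) by (simp add: algebra_simps)
  have "(2*v+1)*2^h \<le> (2*v+1+1)*2^h" by simp
  then show "(2*v+1)*2^h \<le> 2^(d+1)" using c2 by linarith
qed

lemma ex_range: "1 \<le> v \<Longrightarrow> (v+1)*2^h \<le> 2^(d+1) \<Longrightarrow> set (ex v h x) \<subseteq> {..<2^(d+1)-2}"
proof (induction h arbitrary: v)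
  case 0 then show ?case by simp
next
  case (Suc h)
  note sb = step_bounds[OF Suc.prems]
  note c1 = sb(3) and c2 = sb(4)
  have "set (ex (2*v) h x) \<subseteq> {..<2^(d+1)-2}" using Suc.IH[of "2*v"] Suc.prems c1 by simp
  moreover have "set (ex (2*v+1) h x) \<subseteq> {..<2^(d+1)-2}" using Suc.IH[of "2*v+1"] Suc.prems c2 by simp
  moreover note sb(1,2)
  ultimately show ?case by auto
qed

lemma dep_ex: "dep (ex v h) (Cset v h)"
proof (induction h arbitrary: v)
  case 0 then show ?case by (simp add: dep_def)
next
  case (Suc h)
  show ?case unfolding dep_def
  proof (intro allI impI)
    fix x y :: "nat \<Rightarrow> bool" assume xy: "\<forall>i\<in>Cset v (Suc h). x i = y i"
    have a: "x (2*v-2) = y (2*v-2)" "x (2*v-1) = y (2*v-1)" using xy Cset_sub by auto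
    have "ex (2*v) h x = ex (2*v) h y" using Suc.IH[of "2*v"] xy Cset_sub(1)[of v h] unfolding dep_def by blast
    moreover have "ex (2*v+1) h x = ex (2*v+1) h y" using Suc.IH[of "2*v+1"] xy Cset_sub(2)[of v h] unfolding dep_def by blast
    ultimately show "ex v (Suc h) x = ex v (Suc h) y" using a by simp
  qed
qed

fun Q :: "real \<Rightarrow> nat \<Rightarrow> real" where
  "Q pp 0 = 1"
| "Q pp (Suc h) = 1 - (1 - pp * Q pp h)^2"

fun Acost :: "real \<Rightarrow> nat \<Rightarrow> real" where
  "Acost pp 0 = 0"
| "Acost pp (Suc h) = 2 + 2 * pp * Acost pp h"

lemma dep_L: "dep (\<lambda>x. 1 - of_bool (x (2*v-2)) * of_bool (al (2*v) h x) :: real) (SL v h)"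
proof -
  have "dep (\<lambda>x. x (2*v-2)) {2*v-2}" by (simp add: dep_def)
  from dep_comb[OF this dep_al[of "2*v" h], of "\<lambda>b c. 1 - of_bool b * of_bool c :: real"]
  show ?thesis by (rule dep_mono) (auto simp: SL_def)
qed

lemma dep_R: "dep (\<lambda>x. 1 - of_bool (x (2*v-1)) * of_bool (al (2*v+1) h x) :: real) (SR v h)"
proof -
  have "dep (\<lambda>x. x (2*v-1)) {2*v-1}" by (simp add: dep_def)
  from dep_comb[OF this dep_al[of "2*v+1" h], of "\<lambda>b c. 1 - of_bool b * of_bool c :: real"]
  show ?thesis by (rule dep_mono) (auto simp: SR_def)
qed

lemma E_al: "1 \<le> v \<Longrightarrow> (v+1)*2^h \<le> 2^(d+1) \<Longrightarrow>
    E (2^(d+1)-2) (\<lambda>_. pp) (\<lambda>x. of_bool (al v h x)) = Q pp h"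
proof (induction h arbitrary: v)
  case 0 then show ?case by (simp add: al_0 E_const)
next
  case (Suc h)
  define n where "n = (2::nat)^(d+1)-2"
  define a where "a = 2*v-2"
  define b where "b = 2*v-1"
  note sb = step_bounds[OF Suc.prems]
  have v2: "1 \<le> 2*v" "1 \<le> 2*v+1" using Suc.prems by auto
  have EL: "E n (\<lambda>_. pp) (\<lambda>x. of_bool (x a) * of_bool (al (2*v) h x)) = pp * Q pp h"
  proof -
    have "E n (\<lambda>_. pp) (\<lambda>x. of_bool (x a) * of_bool (al (2*v) h x)) =
       E n (\<lambda>_. pp) (\<lambda>x. of_bool (x a)) * E n (\<lambda>_. pp) (\<lambda>x. of_bool (al (2*v) h x))"
    proof (rule E_indep[of "{a}" "Cset (2*v) h"])
      show "{a} \<inter> Cset (2*v) h = {}" using Cset_disj_L[of v h] Suc.prems by (simp add: a_def)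
      show "dep (\<lambda>x. of_bool (x a) :: real) {a}" by (simp add: dep_def)
      show "dep (\<lambda>x. of_bool (al (2*v) h x) :: real) (Cset (2*v) h)" by (rule dep_comp[OF dep_al])
    qed
    also have "\<dots> = pp * Q pp h" using E_coord[of a n] sb Suc.IH[of "2*v"] v2
      by (simp add: a_def n_def)
    finally show ?thesis .
  qed
  have ER: "E n (\<lambda>_. pp) (\<lambda>x. of_bool (x b) * of_bool (al (2*v+1) h x)) = pp * Q pp h"
  proof -
    have "E n (\<lambda>_. pp) (\<lambda>x. of_bool (x b) * of_bool (al (2*v+1) h x)) =
       E n (\<lambda>_. pp) (\<lambda>x. of_bool (x b)) * E n (\<lambda>_. pp) (\<lambda>x. of_bool (al (2*v+1) h x))"
    proof (rule E_indep[of "{b}" "Cset (2*v+1) h"])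
      show "{b} \<inter> Cset (2*v+1) h = {}" using Cset_disj_R[of v h] Suc.prems by (simp add: b_def)
      show "dep (\<lambda>x. of_bool (x b) :: real) {b}" by (simp add: dep_def)
      show "dep (\<lambda>x. of_bool (al (2*v+1) h x) :: real) (Cset (2*v+1) h)" by (rule dep_comp[OF dep_al])
    qed
    also have "\<dots> = pp * Q pp h" using E_coord[of b n] sb Suc.IH[of "2*v+1"] v2
      by (simp add: b_def n_def)
    finally show ?thesis .
  qed
  have "E n (\<lambda>_. pp) (\<lambda>x. of_bool (al v (Suc h) x)) =
     E n (\<lambda>_. pp) (\<lambda>x. 1 - (1 - of_bool (x a) * of_bool (al (2*v) h x)) * (1 - of_bool (x b) * of_bool (al (2*v+1) h x)))"
    by (rule E_cong) (auto simp: al_Suc a_def b_def)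
  also have "\<dots> = 1 - E n (\<lambda>_. pp) (\<lambda>x. (1 - of_bool (x a) * of_bool (al (2*v) h x)) * (1 - of_bool (x b) * of_bool (al (2*v+1) h x)))"
    by (simp add: E_diff E_const)
  also have "\<dots> = 1 - E n (\<lambda>_. pp) (\<lambda>x. 1 - of_bool (x a) * of_bool (al (2*v) h x)) * E n (\<lambda>_. pp) (\<lambda>x. 1 - of_bool (x b) * of_bool (al (2*v+1) h x))"
    using E_indep[OF SL_SR_disj[of v h h] dep_L dep_R] Suc.prems by (simp add: a_def b_def)
  also have "\<dots> = 1 - (1 - pp * Q pp h) * (1 - pp * Q pp h)"
    using EL ER by (simp add: E_diff E_const)
  finally show ?case by (simp add: n_def power2_eq_square)
qed




lemma len_ex_Suc: "real (length (ex v (Suc h) x)) = 2 + of_bool (x (2*v-2)) * real (length (ex (2*v) h x))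
   + of_bool (x (2*v-1)) * real (length (ex (2*v+1) h x))"
  by simp

lemma E_len: "1 \<le> v \<Longrightarrow> (v+1)*2^h \<le> 2^(d+1) \<Longrightarrow>
    E (2^(d+1)-2) (\<lambda>_. pp) (\<lambda>x. real (length (ex v h x))) = Acost pp h"
proof (induction h arbitrary: v)
  case 0 then show ?case by (simp add: E_const)
next
  case (Suc h)
  define n where "n = (2::nat)^(d+1)-2"
  define a where "a = 2*v-2"
  define b where "b = 2*v-1"
  note sb = step_bounds[OF Suc.prems]
  have v2: "1 \<le> 2*v" "1 \<le> 2*v+1" using Suc.prems by auto
  have EL: "E n (\<lambda>_. pp) (\<lambda>x. of_bool (x a) * real (length (ex (2*v) h x))) = pp * Acost pp h"
  proof -
    have "E n (\<lambda>_. pp) (\<lambda>x. of_bool (x a) * real (length (ex (2*v) h x))) =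
       E n (\<lambda>_. pp) (\<lambda>x. of_bool (x a)) * E n (\<lambda>_. pp) (\<lambda>x. real (length (ex (2*v) h x)))"
    proof (rule E_indep[of "{a}" "Cset (2*v) h"])
      show "{a} \<inter> Cset (2*v) h = {}" using Cset_disj_L[of v h] Suc.prems by (simp add: a_def)
      show "dep (\<lambda>x. of_bool (x a) :: real) {a}" by (simp add: dep_def)
      show "dep (\<lambda>x. real (length (ex (2*v) h x))) (Cset (2*v) h)" by (rule dep_comp[OF dep_ex])
    qed
    also have "\<dots> = pp * Acost pp h" using E_coord[of a n] sb Suc.IH[of "2*v"] v2
      by (simp add: a_def n_def)
    finally show ?thesis .
  qed
  have ER: "E n (\<lambda>_. pp) (\<lambda>x. of_bool (x b) * real (length (ex (2*v+1) h x))) = pp * Acost pp h"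
  proof -
    have "E n (\<lambda>_. pp) (\<lambda>x. of_bool (x b) * real (length (ex (2*v+1) h x))) =
       E n (\<lambda>_. pp) (\<lambda>x. of_bool (x b)) * E n (\<lambda>_. pp) (\<lambda>x. real (length (ex (2*v+1) h x)))"
    proof (rule E_indep[of "{b}" "Cset (2*v+1) h"])
      show "{b} \<inter> Cset (2*v+1) h = {}" using Cset_disj_R[of v h] Suc.prems by (simp add: b_def)
      show "dep (\<lambda>x. of_bool (x b) :: real) {b}" by (simp add: dep_def)
      show "dep (\<lambda>x. real (length (ex (2*v+1) h x))) (Cset (2*v+1) h)" by (rule dep_comp[OF dep_ex])
    qed
    also have "\<dots> = pp * Acost pp h" using E_coord[of b n] sb Suc.IH[of "2*v+1"] v2
      by (simp add: b_def n_def)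
    finally show ?thesis .
  qed
  have "E n (\<lambda>_. pp) (\<lambda>x. real (length (ex v (Suc h) x))) =
     E n (\<lambda>_. pp) (\<lambda>x. 2 + of_bool (x a) * real (length (ex (2*v) h x)) + of_bool (x b) * real (length (ex (2*v+1) h x)))"
    unfolding len_ex_Suc a_def b_def ..
  also have "\<dots> = 2 + pp * Acost pp h + pp * Acost pp h"
    using EL ER by (simp add: E_add E_const)
  finally show ?case by (simp add: n_def)
qed

lemma sum_list_ones: "sum_list (map (\<lambda>_. 1::real) l) = real (length l)"
  by (induction l) auto

lemma determined_mono: "determined f n S x \<Longrightarrow> S \<subseteq> S' \<Longrightarrow> determined f n S' x"
  unfolding determined_def by blast

lemma OPTA_le:
  assumes d: "1 \<le> d" and pp: "0 \<le> pp" "pp \<le> 1"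
  shows "OPT_A (bintree_fun d) (2^(d+1)-2) (\<lambda>_. 1) (\<lambda>_. pp) \<le> Acost pp d"
proof -
  define n where "n = (2::nat)^(d+1)-2"
  define t where "t = et 1 d Leaf"
  have cond: "(1+1) * 2^d \<le> (2::nat)^(d+1)" by simp
  have path: "dt_path t x = ex 1 d x" for x unfolding t_def by (simp add: path_et)
  have valid: "valid_dt (bintree_fun d) n t"
    unfolding valid_dt_def
  proof (intro ballI conjI)
    fix x assume "x \<in> cube n"
    show "set (dt_path t x) \<subseteq> {..<n}" unfolding path n_def using ex_range[OF _ cond] by simp
    show "determined (bintree_fun d) n (set (dt_path t x)) x"
      unfolding determined_def path bt_al using ex_det by blast
  qed
  have cost: "dt_cost n (\<lambda>_. 1) (\<lambda>_. pp) t = Acost pp d"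
  proof -
    have "dt_cost n (\<lambda>_. 1) (\<lambda>_. pp) t = E n (\<lambda>_. pp) (\<lambda>x. real (length (ex 1 d x)))"
      unfolding dt_cost_def E_def path sum_list_ones ..
    also have "\<dots> = Acost pp d" unfolding n_def by (rule E_len) (use cond in simp_all)
    finally show ?thesis .
  qed
  have bdd: "bdd_below (dt_cost n (\<lambda>_. 1) (\<lambda>_. pp) ` {t. valid_dt (bintree_fun d) n t})"
  proof (rule bdd_belowI[of _ 0])
    fix y assume "y \<in> dt_cost n (\<lambda>_. 1) (\<lambda>_. pp) ` {t. valid_dt (bintree_fun d) n t}"
    then obtain t' where "y = dt_cost n (\<lambda>_. 1) (\<lambda>_. pp) t'" by blast
    then show "0 \<le> y" unfolding dt_cost_def sum_list_ones
      by (auto intro!: sum_nonneg mult_nonneg_nonneg prob_nonneg simp: pp)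
  qed
  have "OPT_A (bintree_fun d) n (\<lambda>_. 1) (\<lambda>_. pp) \<le> dt_cost n (\<lambda>_. 1) (\<lambda>_. pp) t"
    unfolding OPT_A_def by (rule cInf_lower[OF _ bdd]) (use valid in blast)
  then show ?thesis using cost by (simp add: n_def)
qed

lemma Acost_closed: "Acost pp h * (2*pp - 1) = 2 * ((2*pp)^h - 1)"
  by (induction h) (simp_all add: algebra_simps)




lemma perm_take_n: "\<pi> \<in> perms n \<Longrightarrow> take n \<pi> = \<pi> \<and> set \<pi> = {..<n} \<and> length \<pi> = n"
proof -
  assume "\<pi> \<in> perms n"
  then have d: "distinct \<pi>" and s: "set \<pi> = {..<n}" unfolding perms_def by auto
  have "length \<pi> = n" using distinct_card[OF d] s by simp
  then show ?thesis using s by simp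
qed

lemma det_full: "x \<in> cube n \<Longrightarrow> determined f n {..<n} x"
  unfolding determined_def
proof (intro ballI impI)
  fix y assume x: "x \<in> cube n" and y: "y \<in> cube n" and a: "\<forall>i\<in>{..<n}. y i = x i"
  have "y = x"
  proof
    fix i show "y i = x i" using x y a by (cases "i < n") (auto simp: cube_def)
  qed
  then show "f y = f x" by simp
qed

lemma na_stop_props:
  assumes "\<pi> \<in> perms n" "x \<in> cube n"
  shows "determined f n (set (take (na_stop f n \<pi> x) \<pi>)) x" "na_stop f n \<pi> x \<le> n"
proof -
  have "determined f n (set (take n \<pi>)) x" using perm_take_n[OF assms(1)] det_full[OF assms(2)] by simp
  then show "determined f n (set (take (na_stop f n \<pi> x) \<pi>)) x" "na_stop f n \<pi> x \<le> n"
    unfolding na_stop_def by (auto intro: LeastI Least_le)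
qed

lemma stop_gt:
  assumes "\<pi> \<in> perms n" "x \<in> cube n" "\<not> determined f n (set (take m \<pi>)) x"
  shows "m < na_stop f n \<pi> x"
proof (rule ccontr)
  assume "\<not> m < na_stop f n \<pi> x"
  then have "set (take (na_stop f n \<pi> x) \<pi>) \<subseteq> set (take m \<pi>)"
    by (simp add: set_take_subset_set_take)
  then show False using determined_mono[OF na_stop_props(1)[OF assms(1,2)]] assms(3) by blast
qed

lemma cost_eq:
  assumes "\<pi> \<in> perms n"
  shows "na_cost f n (\<lambda>_. 1) p \<pi> = E n p (\<lambda>x. real (na_stop f n \<pi> x))"
  unfolding na_cost_def E_def sum_list_ones
proof (rule sum.cong)
  fix x assume "x \<in> cube n"
  then show "prob p n x * real (length (take (na_stop f n \<pi> x) \<pi>)) = prob p n x * real (na_stop f n \<pi> x)"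
    using na_stop_props(2)[OF assms, of x f] perm_take_n[OF assms] by (simp add: min_def)
qed simp

definition Pw :: "nat \<Rightarrow> nat \<Rightarrow> nat set" where "Pw d w = (\<lambda>k. w div 2^k - 2) ` {..<d}"
definition Wset :: "nat \<Rightarrow> nat set \<Rightarrow> nat set" where "Wset d T = {w\<in>{2^d..<2^(d+1)}. Pw d w \<subseteq> T}"

lemma union_pt:
  assumes d: "1 \<le> d" and T: "T \<subseteq> {..<n}" and x: "x \<in> cube n"
    and f: "bintree_fun d x" and det: "determined (bintree_fun d) n T x"
  shows "\<exists>w\<in>Wset d T. \<forall>i\<in>Pw d w. x i"
proof -
  define y where "y = (\<lambda>i. i \<in> T \<and> x i)"
  have y: "y \<in> cube n" using x unfolding cube_def y_def by auto
  have "bintree_fun d y" using det f y unfolding determined_def y_def by auto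
  then obtain w where w: "w \<in> {2^d..<2^(d+1)}" "\<forall>k<d. y (w div 2^k - 2)"
    unfolding bintree_fun_def by blast
  then have "Pw d w \<subseteq> T" "\<forall>i\<in>Pw d w. x i" unfolding Pw_def y_def by auto
  then show ?thesis using w(1) unfolding Wset_def by blast
qed

lemma div_ge2: "2^d \<le> (w::nat) \<Longrightarrow> k < d \<Longrightarrow> 2 \<le> w div 2^k"
proof -
  assume a: "2^d \<le> w" "k < d"
  have "2^d div 2^k \<le> w div 2^k" using a(1) by (rule div_le_mono)
  moreover have "(2::nat)^d div 2^k = 2^(d-k)" using a(2) by (simp add: power_diff)
  moreover have "(2::nat) \<le> 2^(d-k)" using a(2)
    by (metis One_nat_def Suc_leI power_increasing power_one_right zero_less_diff less_le_trans le_refl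
        one_le_numeral)
  ultimately show ?thesis by linarith
qed

lemma card_Pw: "2^d \<le> w \<Longrightarrow> card (Pw d w) = d"
proof -
  assume w: "2^d \<le> w"
  have "inj_on (\<lambda>k. w div 2^k - 2) {..<d}"
  proof (rule inj_onI)
    fix k1 k2 assume k: "k1 \<in> {..<d}" "k2 \<in> {..<d}" and eq: "w div 2^k1 - 2 = w div 2^k2 - 2"
    have g: "2 \<le> w div 2^k1" "2 \<le> w div 2^k2" using div_ge2[OF w] k by auto
    then have e: "w div 2^k1 = w div 2^k2" using eq by simp
    show "k1 = k2"
    proof (rule ccontr)
      assume "k1 \<noteq> k2"
      then consider "k1 < k2" | "k2 < k1" by linarith
      then show False
      proof cases
        case 1
        have "w div 2^k2 = w div 2^k1 div 2^(k2-k1)" using 1 div_pow_add[of w k1 "k2-k1"] by simp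
        moreover have "w div 2^k1 div 2^(k2-k1) < w div 2^k1" using 1 g by (intro div_pow_lt) auto
        ultimately show False using e by simp
      next
        case 2
        have "w div 2^k1 = w div 2^k2 div 2^(k1-k2)" using 2 div_pow_add[of w k2 "k1-k2"] by simp
        moreover have "w div 2^k2 div 2^(k1-k2) < w div 2^k2" using 2 g by (intro div_pow_lt) auto
        ultimately show False using e by simp
      qed
    qed
  qed
  then show ?thesis unfolding Pw_def by (simp add: card_image)
qed

lemma Pw_range: "w < 2^(d+1) \<Longrightarrow> 2^d \<le> w \<Longrightarrow> 1 \<le> d \<Longrightarrow> Pw d w \<subseteq> {..<2^(d+1)-2}"
proof
  fix i assume a: "w < 2^(d+1)" "2^d \<le> w" "1 \<le> d" and "i \<in> Pw d w"
  then obtain k where i: "i = w div 2^k - 2" unfolding Pw_def by blast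
  have "(2::nat) \<le> 2^d" using a(3) by (metis power_increasing power_one_right one_le_numeral)
  then have "2 \<le> w" using a(2) by linarith
  then have "w div 2^k - 2 \<le> w - 2" using div_pow_le[of w k] by linarith
  then show "i \<in> {..<2^(d+1)-2}" using i a(1) \<open>2 \<le> w\<close> by auto
qed

lemma card_W: "1 \<le> d \<Longrightarrow> finite T \<Longrightarrow> card (Wset d T) \<le> card T"
proof -
  assume d: "1 \<le> d" and T: "finite T"
  have "(2::nat) \<le> 2^d" using d by (metis power_increasing power_one_right one_le_numeral)
  then have ge: "w \<in> Wset d T \<Longrightarrow> 2 \<le> w" for w unfolding Wset_def by auto
  have "inj_on (\<lambda>w. w - 2) (Wset d T)"
  proof (rule inj_onI)
    fix a b assume "a \<in> Wset d T" "b \<in> Wset d T" "a - 2 = b - 2"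
    then show "a = b" using ge[of a] ge[of b] by linarith
  qed
  moreover have "(\<lambda>w. w - 2) ` Wset d T \<subseteq> T"
  proof
    fix i assume "i \<in> (\<lambda>w. w - 2) ` Wset d T"
    then obtain w where w: "w \<in> Wset d T" "i = w - 2" by blast
    have "w div 2^0 - 2 \<in> Pw d w" unfolding Pw_def using d by (intro imageI) auto
    then show "i \<in> T" using w unfolding Wset_def by auto
  qed
  ultimately show ?thesis using card_inj_on_le T by blast
qed

lemma prob_det:
  assumes d: "1 \<le> d" and pp: "0 \<le> pp" "pp \<le> 1" and T: "T \<subseteq> {..<2^(d+1)-2}" "finite T"
  shows "E (2^(d+1)-2) (\<lambda>_. pp) (\<lambda>x. of_bool (bintree_fun d x \<and> determined (bintree_fun d) (2^(d+1)-2) T x))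
     \<le> real (card T) * pp^d"
proof -
  define n where "n = (2::nat)^(d+1)-2"
  have finW: "finite (Wset d T)" unfolding Wset_def by simp
  have "E n (\<lambda>_. pp) (\<lambda>x. of_bool (bintree_fun d x \<and> determined (bintree_fun d) n T x))
      \<le> E n (\<lambda>_. pp) (\<lambda>x. \<Sum>w\<in>Wset d T. of_bool (\<forall>i\<in>Pw d w. x i))"
  proof (rule E_mono)
    show "0 \<le> pp \<and> pp \<le> 1" for i :: nat using pp by simp
    fix x assume x: "x \<in> cube n"
    show "of_bool (bintree_fun d x \<and> determined (bintree_fun d) n T x) \<le> (\<Sum>w\<in>Wset d T. of_bool (\<forall>i\<in>Pw d w. x i) :: real)"
    proof (cases "bintree_fun d x \<and> determined (bintree_fun d) n T x")
      case True
      then obtain w where w: "w \<in> Wset d T" "\<forall>i\<in>Pw d w. x i" using union_pt[OF d _ x] T(1) unfolding n_def by blast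
      have "(of_bool (\<forall>i\<in>Pw d w. x i) :: real) \<le> (\<Sum>w\<in>Wset d T. of_bool (\<forall>i\<in>Pw d w. x i))"
        by (rule member_le_sum[OF w(1) _ finW]) simp
      then show ?thesis using True w(2) by simp
    next
      case False
      have "(0::real) \<le> (\<Sum>w\<in>Wset d T. of_bool (\<forall>i\<in>Pw d w. x i))" by (rule sum_nonneg) simp
      then show ?thesis using False by auto
    qed
  qed
  also have "\<dots> = (\<Sum>w\<in>Wset d T. E n (\<lambda>_. pp) (\<lambda>x. of_bool (\<forall>i\<in>Pw d w. x i)))"
    by (rule E_sum[OF finW])
  also have "\<dots> = (\<Sum>w\<in>Wset d T. pp^d)"
  proof (rule sum.cong)
    fix w assume "w \<in> Wset d T"
    then have w: "w < 2^(d+1)" "2^d \<le> w" unfolding Wset_def by auto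
    have "E n (\<lambda>_. pp) (\<lambda>x. of_bool (\<forall>i\<in>Pw d w. x i)) = (\<Prod>i\<in>Pw d w. pp)"
      by (rule E_ones) (use Pw_range[OF w d] in \<open>auto simp: n_def Pw_def\<close>)
    then show "E n (\<lambda>_. pp) (\<lambda>x. of_bool (\<forall>i\<in>Pw d w. x i)) = pp^d" using card_Pw[OF w(2)] by simp
  qed simp
  also have "\<dots> = real (card (Wset d T)) * pp^d" by simp
  also have "\<dots> \<le> real (card T) * pp^d" using card_W[OF d T(2)] pp by (simp add: mult_right_mono)
  finally show ?thesis unfolding n_def .
qed

lemma f_zero: "1 \<le> d \<Longrightarrow> \<not> bintree_fun d (\<lambda>_. False)"
  unfolding bintree_fun_def by (auto intro: exI[of _ 0])

lemma E_f: "E (2^(d+1)-2) (\<lambda>_. pp) (\<lambda>x. of_bool (bintree_fun d x)) = Q pp d"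
  unfolding bt_al by (rule E_al) simp_all

lemma nacost_lb1:
  assumes d: "1 \<le> d" and pp: "0 \<le> pp" "pp \<le> 1" and \<pi>: "\<pi> \<in> perms (2^(d+1)-2)"
  shows "Q pp d \<le> na_cost (bintree_fun d) (2^(d+1)-2) (\<lambda>_. 1) (\<lambda>_. pp) \<pi>"
proof -
  define n where "n = (2::nat)^(d+1)-2"
  have "E n (\<lambda>_. pp) (\<lambda>x. of_bool (bintree_fun d x)) \<le> E n (\<lambda>_. pp) (\<lambda>x. real (na_stop (bintree_fun d) n \<pi> x))"
  proof (rule E_mono)
    show "0 \<le> pp \<and> pp \<le> 1" for i :: nat using pp by simp
    fix x assume x: "x \<in> cube n"
    show "of_bool (bintree_fun d x) \<le> real (na_stop (bintree_fun d) n \<pi> x)"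
    proof (cases "bintree_fun d x")
      case True
      have z: "(\<lambda>_. False) \<in> cube n" unfolding cube_def by simp
      have "\<not> determined (bintree_fun d) n (set (take 0 \<pi>)) x"
        unfolding determined_def using z True f_zero[OF d] by auto
      then have "0 < na_stop (bintree_fun d) n \<pi> x" using stop_gt[OF \<pi>[folded n_def] x] by blast
      then show ?thesis by simp
    qed simp
  qed
  then show ?thesis using E_f[of d pp] cost_eq[OF \<pi>] by (simp add: n_def)
qed

lemma nacost_lb2:
  assumes d: "1 \<le> d" and pp: "0 \<le> pp" "pp \<le> 1" and \<pi>: "\<pi> \<in> perms (2^(d+1)-2)"
  shows "real m * (Q pp d - real m * pp^d) \<le> na_cost (bintree_fun d) (2^(d+1)-2) (\<lambda>_. 1) (\<lambda>_. pp) \<pi>"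
proof -
  define n where "n = (2::nat)^(d+1)-2"
  define T where "T = set (take m \<pi>)"
  have T: "T \<subseteq> {..<n}" "finite T" using perm_take_n[OF \<pi>] set_take_subset[of m \<pi>]
    unfolding T_def n_def by auto
  have cT: "card T \<le> m" unfolding T_def using card_length[of "take m \<pi>"] by simp
  let ?f = "bintree_fun d"
  have "E n (\<lambda>_. pp) (\<lambda>x. real m * (of_bool (?f x) - of_bool (?f x \<and> determined ?f n T x)))
     \<le> E n (\<lambda>_. pp) (\<lambda>x. real (na_stop ?f n \<pi> x))"
  proof (rule E_mono)
    show "0 \<le> pp \<and> pp \<le> 1" for i :: nat using pp by simp
    fix x assume x: "x \<in> cube n"
    show "real m * (of_bool (?f x) - of_bool (?f x \<and> determined ?f n T x)) \<le> real (na_stop ?f n \<pi> x)"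
    proof (cases "?f x \<and> \<not> determined ?f n T x")
      case True
      then have "m < na_stop ?f n \<pi> x" using stop_gt[OF \<pi>[folded n_def] x] unfolding T_def by blast
      then show ?thesis using True by simp
    next
      case False then show ?thesis by auto
    qed
  qed
  then have "real m * (Q pp d - E n (\<lambda>_. pp) (\<lambda>x. of_bool (?f x \<and> determined ?f n T x)))
      \<le> na_cost ?f n (\<lambda>_. 1) (\<lambda>_. pp) \<pi>"
    using E_f[of d pp] cost_eq[OF \<pi>[folded n_def]] by (simp add: E_cmult E_diff n_def)
  moreover have "E n (\<lambda>_. pp) (\<lambda>x. of_bool (?f x \<and> determined ?f n T x)) \<le> real m * pp^d"
  proof -
    have "E n (\<lambda>_. pp) (\<lambda>x. of_bool (?f x \<and> determined ?f n T x)) \<le> real (card T) * pp^d"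
      using prob_det[OF d pp T[unfolded n_def]] by (simp add: n_def)
    also have "\<dots> \<le> real m * pp^d" using cT pp by (simp add: mult_right_mono)
    finally show ?thesis .
  qed
  ultimately have "real m * (Q pp d - real m * pp^d) \<le> na_cost ?f n (\<lambda>_. 1) (\<lambda>_. pp) \<pi>"
    by (smt (verit) mult_left_mono of_nat_0_le_iff)
  then show ?thesis by (simp add: n_def)
qed




lemma Q_step:
  fixes e q :: real
  assumes e: "0 < e" "e \<le> 1/2" and q: "e \<le> q" "q \<le> 1"
  shows "e \<le> 1 - (1 - (1+e)/2 * q)^2 \<and> 1 - (1 - (1+e)/2 * q)^2 \<le> 1"
proof -
  define pp where "pp = (1+e)/2"
  have pp: "0 < pp" "pp \<le> 1" using e by (auto simp: pp_def)
  have a: "0 \<le> 1 - pp*q" using pp q by (smt (verit) mult_left_le mult_le_one)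
  have b: "1 - pp*q \<le> 1 - pp*e" using pp q by (simp add: mult_left_mono)
  have "(1 - pp*q)^2 \<le> (1 - pp*e)^2" using power_mono[OF b a] .
  moreover have "e \<le> 1 - (1 - pp*e)^2"
  proof -
    have "1 - (1 - pp*e)^2 - e = e * (2*pp - 1 - pp^2*e)" by (simp add: algebra_simps power2_eq_square)
    moreover have "2*pp - 1 - pp^2*e \<ge> 0"
    proof -
      have "pp^2 \<le> 1" using pp by (simp add: power_le_one)
      then have "pp^2*e \<le> 1 * e" using e by (intro mult_right_mono) auto
      moreover have "2*pp - 1 = e" by (simp add: pp_def field_simps)
      ultimately show ?thesis using e by linarith
    qed
    ultimately show ?thesis using e by (smt (verit) mult_nonneg_nonneg)
  qed
  ultimately show ?thesis by (simp add: pp_def[symmetric])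
qed

lemma Q_ge: "0 < e \<Longrightarrow> e \<le> 1/2 \<Longrightarrow> e \<le> Q ((1+e)/2) h \<and> Q ((1+e)/2) h \<le> 1"
proof (induction h)
  case 0 then show ?case by simp
next
  case (Suc h) then show ?case using Q_step[of e "Q ((1+e)/2) h"] by simp
qed

lemma OPTN_ge:
  assumes e: "0 < e" "e \<le> 1/2" and d: "1 \<le> d"
  shows "e^2 / (8 * ((1+e)/2)^d) \<le> OPT_N (bintree_fun d) (2^(d+1)-2) (\<lambda>_. 1) (\<lambda>_. (1+e)/2)"
proof -
  define pp where "pp = (1+e)/2"
  define n where "n = (2::nat)^(d+1)-2"
  define P where "P = pp^d"
  have pp: "0 \<le> pp" "pp \<le> 1" using e by (auto simp: pp_def)
  have P: "0 < P" using e by (simp add: P_def pp_def)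
  have Q: "e \<le> Q pp d" using Q_ge[OF e] by (simp add: pp_def)
  define X where "X = e / (2*P)"
  have XP: "X * P = e/2" using P by (simp add: X_def)
  have B: "e^2 / (8 * P) = X * e / 4" using P by (simp add: X_def power2_eq_square)
  have each: "e^2 / (8 * P) \<le> na_cost (bintree_fun d) n (\<lambda>_. 1) (\<lambda>_. pp) \<pi>" if \<pi>: "\<pi> \<in> perms n" for \<pi>
  proof (cases "X \<ge> 2")
    case True
    define m where "m = nat (floor X)"
    have m1: "real m \<le> X" "X - 1 \<le> real m" using True by (auto simp: m_def)
    have "real m * (Q pp d - real m * P) \<le> na_cost (bintree_fun d) n (\<lambda>_. 1) (\<lambda>_. pp) \<pi>"
      using nacost_lb2[OF d pp, of \<pi> m] \<pi> by (simp add: n_def P_def)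
    moreover have "real m * (e/2) \<le> real m * (Q pp d - real m * P)"
    proof (rule mult_left_mono)
      have "real m * P \<le> X * P" using m1 P by (simp add: mult_right_mono)
      then show "e/2 \<le> Q pp d - real m * P" using Q XP by linarith
    qed simp
    moreover have "X * e / 4 \<le> real m * (e/2)"
    proof -
      have "X/2 \<le> real m" using m1 True by linarith
      then have "X/2 * (e/2) \<le> real m * (e/2)" using e by (intro mult_right_mono) auto
      then show ?thesis by simp
    qed
    ultimately show ?thesis using B by linarith
  next
    case False
    have "Q pp d \<le> na_cost (bintree_fun d) n (\<lambda>_. 1) (\<lambda>_. pp) \<pi>"
      using nacost_lb1[OF d pp] \<pi> by (simp add: n_def)
    moreover have "X * e / 4 \<le> e"
    proof -
      have "X \<le> 2" using False by simp
      then have "X * e \<le> 2 * e" using e by (intro mult_right_mono) auto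
      then show ?thesis using e by simp
    qed
    ultimately show ?thesis using B Q by linarith
  qed
  have ne: "perms n \<noteq> {}"
  proof -
    have "[0..<n] \<in> perms n" unfolding perms_def by auto
    then show ?thesis by blast
  qed
  have "e^2 / (8 * P) \<le> OPT_N (bintree_fun d) n (\<lambda>_. 1) (\<lambda>_. pp)"
    unfolding OPT_N_def by (rule cInf_greatest) (use ne each in auto)
  then show ?thesis by (simp add: n_def P_def pp_def)
qed

lemma OPTA_le2:
  assumes e: "0 < e" "e \<le> 1/2" and d: "1 \<le> d"
  shows "OPT_A (bintree_fun d) (2^(d+1)-2) (\<lambda>_. 1) (\<lambda>_. (1+e)/2) \<le> 2 * (1+e)^d / e"
proof -
  have "OPT_A (bintree_fun d) (2^(d+1)-2) (\<lambda>_. 1) (\<lambda>_. (1+e)/2) \<le> Acost ((1+e)/2) d"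
    by (rule OPTA_le[OF d]) (use e in auto)
  moreover have "Acost ((1+e)/2) d * e = 2 * ((1+e)^d - 1)"
  proof -
    have "2 * ((1+e)/2) = 1 + e" by simp
    then show ?thesis using Acost_closed[of "(1+e)/2" d] by (simp only:) simp
  qed
  then have "Acost ((1+e)/2) d = 2 * ((1+e)^d - 1) / e" using e by (simp add: field_simps)
  moreover have "2 * ((1+e)^d - 1) / e \<le> 2 * (1+e)^d / e" using e by (simp add: divide_right_mono)
  ultimately show ?thesis by linarith
qed

theorem theorem6:
  shows "\<exists>c0::real. c0 > 0 \<and>
    (\<forall>(\<epsilon>::real) (d::nat). 0 < \<epsilon> \<and> \<epsilon> \<le> 1/2 \<and> 1 \<le> d \<longrightarrow>
      (let n = 2^(d+1) - 2; c = (\<lambda>_. 1::real); p = (\<lambda>_. (1 + \<epsilon>) / 2) in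
        OPT_N (bintree_fun d) n c p \<ge>
          c0 * \<epsilon>^3 * real n powr (1 - 2 * \<epsilon> / ln 2) * OPT_A (bintree_fun d) n c p))"
proof (intro exI[of _ "1/32"] conjI allI impI)
  show "(0::real) < 1/32" by simp
  fix e :: real and d :: nat
  assume a: "0 < e \<and> e \<le> 1/2 \<and> 1 \<le> d"
  then have e: "0 < e" "e \<le> 1/2" and d: "1 \<le> d" by auto
  define n where "n = (2::nat)^(d+1)-2"
  define G :: real where "G = 2^d"
  define Y :: real where "Y = (1+e)^d"
  define Z :: real where "Z = exp (e * d)"
  define Np where "Np = real n powr (1 - 2 * e / ln 2)"
  define A where "A = OPT_A (bintree_fun d) n (\<lambda>_. 1) (\<lambda>_. (1+e)/2)"
  define N where "N = OPT_N (bintree_fun d) n (\<lambda>_. 1) (\<lambda>_. (1+e)/2)"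
  have G: "0 < G" by (simp add: G_def)
  have Y: "0 < Y" using e by (simp add: Y_def)
  have Z: "0 < Z" by (simp add: Z_def)
  have YZ: "Y \<le> Z"
  proof -
    have "(1+e)^d \<le> exp e ^ d" using e exp_ge_add_one_self[of e] by (intro power_mono) (auto simp: add.commute)
    then show ?thesis by (simp add: Y_def Z_def exp_of_nat_mult[symmetric] mult.commute)
  qed
  have nG: "G \<le> real n" "real n \<le> 2 * G"
  proof -
    have "(2::nat)^d \<ge> 2" using d by (metis power_increasing power_one_right one_le_numeral)
    then have "2^d \<le> n" by (simp add: n_def)
    then show "G \<le> real n" unfolding G_def by (metis of_nat_le_iff of_nat_numeral of_nat_power)
    show "real n \<le> 2 * G" unfolding G_def n_def by simp
  qed
  have Np: "0 \<le> Np" "Np \<le> 2 * G / Z^2"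
  proof -
    show "0 \<le> Np" by (simp add: Np_def)
    define a where "a = 2 * e / ln 2"
    have ln2: "0 < ln (2::real)" by simp
    have a0: "0 \<le> a" using e ln2 by (simp add: a_def)
    have n0: "0 < real n" using nG G by linarith
    have "Np = real n powr (1 + - a)" unfolding Np_def a_def by simp
    also have "\<dots> = real n powr 1 * real n powr (-a)" by (rule powr_add)
    finally have "Np = real n powr 1 * real n powr (-a)" .
    also have "\<dots> = real n * real n powr (-a)" using n0 by simp
    also have "\<dots> \<le> (2 * G) * G powr (-a)"
    proof (rule mult_mono)
      show "real n powr (-a) \<le> G powr (-a)" by (rule powr_mono2') (use a0 G nG in auto)
    qed (use nG in auto)
    also have "G powr (-a) = exp (- (2 * e * d))"
      using G ln2 by (simp add: powr_def G_def ln_realpow a_def)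
    also have "exp (- (2 * e * d)) = 1 / Z^2"
      by (simp add: Z_def exp_minus power2_eq_square exp_add[symmetric] algebra_simps inverse_eq_divide)
    finally show "Np \<le> 2 * G / Z^2" by simp
  qed
  have A: "A \<le> 2 * Y / e" using OPTA_le2[OF e d] by (simp add: A_def n_def Y_def)
  have N: "e^2 / (8 * (Y / G)) \<le> N"
    using OPTN_ge[OF e d] by (simp add: N_def n_def Y_def G_def power_divide)
  have "1/32 * e^3 * Np * A \<le> 1/32 * e^3 * Np * (2 * Y / e)"
    using A Np e by (intro mult_left_mono) auto
  also have "\<dots> \<le> 1/32 * e^3 * (2 * G / Z^2) * (2 * Y / e)"
    using Np e Y by (intro mult_right_mono mult_left_mono) auto
  also have "\<dots> = e^2 * G * Y / (8 * Z^2)"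
    using e by (simp add: power2_eq_square power3_eq_cube field_simps)
  also have "\<dots> \<le> e^2 * G / (8 * Y)"
  proof -
    have "Y^2 \<le> Z^2" using YZ Y by (intro power_mono) auto
    then have "e^2 * G * Y * (8 * Y) \<le> e^2 * G * (8 * Z^2)"
      using e G by (simp add: power2_eq_square algebra_simps mult_left_mono)
    then show ?thesis using Y Z by (simp add: divide_le_eq le_divide_eq field_simps)
  qed
  also have "\<dots> = e^2 / (8 * (Y / G))" using G by simp
  also have "\<dots> \<le> N" by (rule N)
  finally have "1/32 * e^3 * Np * A \<le> N" .
  then show "let n = 2^(d+1) - 2; c = (\<lambda>_. 1::real); p = (\<lambda>_. (1 + e) / 2) in
        OPT_N (bintree_fun d) n c p \<ge> 1/32 * e^3 * real n powr (1 - 2 * e / ln 2) * OPT_A (bintree_fun d) n c p"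
    by (simp add: Let_def N_def A_def Np_def n_def)
qed


end
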